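(* Let $(\Re, S, V)$ be a $V$-complete vector $S$-metric space, where $V$ is Archimedean. Let $K:\Re\to\Re$ be a continuous map and let $f:\Re\to\Re$ be a map commuting with $K$ (i.e. $fK=Kf$). Suppose: (a) $f(\Re)\subseteq K(\Re)$; (b) there is a constant $q\in[0,\tfrac13)$ such that for all $x,y\in\Re$, \[ S(fx,fx,fy)\preceq q\,U(x,x,y) \] for some \[ U(x,x,y)\in\{S(Kx,Kx,Ky),\ S(Kx,Kx,fx),\ S(Ky,Ky,fy),\ S(Kx,Kx,fy),\ S(Ky,Ky,fx)\}; \] (c) $K(\Re)$ or $f(\Re)$ is $V$-complete as a subspace of $\Re$. Then $K$ and $f$ have a unique common fixed point.
   Context: A vector lattice (Riesz space) $V$ is a real vector space with a partial order $\preceq$ compatible with the linear structure ($p_1 \preceq p_2 \Rightarrow p_1+p_3 \preceq p_2+p_3$ and $\omega p_1 \preceq \omega p_2$ for real $\omega>0$) in which every two-element set has a supremum and an infimum. $V$ is Archimedean if $\inf\{\tfrac{1}{m}v : m \in \mathbb{N}\} = 0$ for every $v \in V^+=\{v\in V: v\succeq 0\}$. For a sequence $(\mu_n)$ in $V$, $\mu_n \downarrow 0$ means $(\mu_n)$ is decreasing with $\inf_n \mu_n = 0$. A vector $S$-metric on a nonempty set $\Re$ is a map $S:\Re\times\Re\times\Re\to V$ such that for all $x,y,z,a\in\Re$: (a) $S(x,y,z)\succeq 0$; (b) $S(x,y,z)=0$ iff $x=y=z$; (c) $S(x,y,z)\preceq S(x,y,a)+S(y,y,a)+S(z,z,a)$.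 The triple $(\Re,S,V)$ is a vector $S$-metric space. A sequence $(x_n)$ in $\Re$ $V$-converges to $x\in\Re$ (written $x_n \xrightarrow{S,V} x$) if there is a sequence $(\mu_n)$ in $V$ with $\mu_n\downarrow 0$ and $S(x_n,x_n,x)\preceq \mu_n$ for all $n$. It is $V$-Cauchy if there is $(\mu_n)$ in $V$ with $\mu_n\downarrow 0$ and $S(x_n,x_n,x_{n+q})\preceq\mu_n$ for all $n$ and all $q$. The space (or a subset of it) is $V$-complete if every $V$-Cauchy sequence in it $V$-converges to a limit in it. A map $K:\Re\to\Re$ is continuous if $x_n\xrightarrow{S,V}x$ implies $Kx_n\xrightarrow{S,V}Kx$. *)

theory Defs
  imports "HOL-Analysis.Analysis"
begin

text \<open>Vector lattices (Riesz spaces) are modelled by the type class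
  constraint {ordered_real_vector, lattice}.\<close>

definition is_infimum :: "'v::order set \<Rightarrow> 'v \<Rightarrow> bool" where
  "is_infimum A x \<longleftrightarrow> (\<forall>a\<in>A. x \<le> a) \<and> (\<forall>y. (\<forall>a\<in>A. y \<le> a) \<longrightarrow> y \<le> x)"

definition archimedean_vl :: "'v::{ordered_real_vector, lattice} itself \<Rightarrow> bool" where
  "archimedean_vl _ \<longleftrightarrow>
     (\<forall>v::'v. 0 \<le> v \<longrightarrow> is_infimum {(1 / real m) *\<^sub>R v | m. m \<ge> 1} 0)"

definition decr_to_zero :: "(nat \<Rightarrow> 'v::{ordered_real_vector, lattice}) \<Rightarrow> bool" where
  "decr_to_zero \<mu> \<longleftrightarrow> (\<forall>n. \<mu> (Suc n) \<le> \<mu> n) \<and> is_infimum (range \<mu>) 0"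

definition vector_S_metric :: "('a \<Rightarrow> 'a \<Rightarrow> 'a \<Rightarrow> 'v::{ordered_real_vector, lattice}) \<Rightarrow> bool" where
  "vector_S_metric S \<longleftrightarrow>
     (\<forall>x y z. 0 \<le> S x y z) \<and>
     (\<forall>x y z. S x y z = 0 \<longleftrightarrow> x = y \<and> y = z) \<and>
     (\<forall>x y z a. S x y z \<le> S x y a + S y y a + S z z a)"

definition V_converges ::
  "('a \<Rightarrow> 'a \<Rightarrow> 'a \<Rightarrow> 'v::{ordered_real_vector, lattice}) \<Rightarrow> (nat \<Rightarrow> 'a) \<Rightarrow> 'a \<Rightarrow> bool" where
  "V_converges S xs x \<longleftrightarrow> (\<exists>\<mu>. decr_to_zero \<mu> \<and> (\<forall>n. S (xs n) (xs n) x \<le> \<mu> n))"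

definition V_Cauchy ::
  "('a \<Rightarrow> 'a \<Rightarrow> 'a \<Rightarrow> 'v::{ordered_real_vector, lattice}) \<Rightarrow> (nat \<Rightarrow> 'a) \<Rightarrow> bool" where
  "V_Cauchy S xs \<longleftrightarrow> (\<exists>\<mu>. decr_to_zero \<mu> \<and> (\<forall>n q. S (xs n) (xs n) (xs (n + q)) \<le> \<mu> n))"

definition V_complete_on ::
  "('a \<Rightarrow> 'a \<Rightarrow> 'a \<Rightarrow> 'v::{ordered_real_vector, lattice}) \<Rightarrow> 'a set \<Rightarrow> bool" where
  "V_complete_on S A \<longleftrightarrow>
     (\<forall>xs. (\<forall>n. xs n \<in> A) \<longrightarrow> V_Cauchy S xs \<longrightarrow> (\<exists>x\<in>A. V_converges S xs x))"

definition V_continuous ::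
  "('a \<Rightarrow> 'a \<Rightarrow> 'a \<Rightarrow> 'v::{ordered_real_vector, lattice}) \<Rightarrow> ('a \<Rightarrow> 'a) \<Rightarrow> bool" where
  "V_continuous S K \<longleftrightarrow>
     (\<forall>xs x. V_converges S xs x \<longrightarrow> V_converges S (\<lambda>n. K (xs n)) (K x))"

end

theory Submission imports Defs begin

lemma Sm_nonneg: "vector_S_metric S \<Longrightarrow> 0 \<le> S x y z"
  unfolding vector_S_metric_def by simp
lemma Sm_zero: "vector_S_metric S \<Longrightarrow> S x y z = 0 \<longleftrightarrow> x = y \<and> y = z"
  unfolding vector_S_metric_def by simp
lemma Sm_tri0: "vector_S_metric S \<Longrightarrow> S x y z \<le> S x y a + S y y a + S z z a"
  unfolding vector_S_metric_def by simp
lemma Sm_sym_le: assumes "vector_S_metric S" shows "S x x y \<le> S y y x"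
proof -
  have "S x x y \<le> S x x x + S x x x + S y y x" using Sm_tri0[OF assms] .
  thus ?thesis using Sm_zero[OF assms, of x x x] by simp
qed
lemma Sm_sym: "vector_S_metric S \<Longrightarrow> S x x y = S y y x"
  by (meson Sm_sym_le antisym)
lemma Sm_tri: assumes "vector_S_metric S" shows "S x x z \<le> S x x a + S x x a + S a a z"
  using Sm_tri0[OF assms, of x x z a] Sm_sym[OF assms, of z a] by simp

lemma le_self_scale: fixes E :: "'v::ordered_real_vector"
  assumes "E \<le> q *\<^sub>R E" "q < 1" shows "E \<le> 0"
proof -
  have "(1 - q) *\<^sub>R E \<le> 0" using assms(1) by (simp add: algebra_simps)
  thus ?thesis using pos_le_divideR_eq[of "1-q" E 0] assms(2) by simp
qed

lemma contr_step: fixes d d' :: "'v::ordered_real_vector"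
  assumes "d' \<le> q *\<^sub>R (d + d + d')" "0 \<le> q" "q < 1/3"
  shows "d' \<le> (2*q/(1-q)) *\<^sub>R d"
proof -
  have e1: "q *\<^sub>R (d + d + d') = (2*q) *\<^sub>R d + q *\<^sub>R d'"
    by (simp add: scaleR_add_right scaleR_left_distrib[symmetric])
  have e2: "(1 - q) *\<^sub>R d' = d' - q *\<^sub>R d'" by (simp add: scaleR_diff_left)
  have A: "d' \<le> (2*q) *\<^sub>R d + q *\<^sub>R d'" using assms(1) e1 by simp
  have "(1 - q) *\<^sub>R d' \<le> (2*q) *\<^sub>R d" unfolding e2 by (subst diff_le_eq) (rule A)
  hence "d' \<le> ((2*q) *\<^sub>R d) /\<^sub>R (1 - q)"
    using pos_le_divideR_eq[of "1-q" d' "(2*q) *\<^sub>R d"] assms(3) by simp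
  hence "d' \<le> (inverse (1 - q) * (2 * q)) *\<^sub>R d" by simp
  moreover have "inverse (1 - q) * (2 * q) = 2 * q / (1 - q)" by (simp add: divide_inverse)
  ultimately show ?thesis by simp
qed

lemma decr_geom:
  fixes v :: "'v::{ordered_real_vector, lattice}"
  assumes arch: "archimedean_vl TYPE('v)" and v: "0 \<le> v" and c: "0 \<le> c" and r: "0 \<le> r" "r < 1"
  shows "decr_to_zero (\<lambda>n. (c * r^n) *\<^sub>R v)"
  unfolding decr_to_zero_def is_infimum_def
proof (intro conjI allI ballI impI)
  fix n
  show "(c * r ^ Suc n) *\<^sub>R v \<le> (c * r ^ n) *\<^sub>R v"
    using r c v power_decreasing[of n "Suc n" r] by (intro scaleR_right_mono mult_left_mono) auto
next
  fix a assume "a \<in> range (\<lambda>n. (c * r ^ n) *\<^sub>R v)"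
  then show "0 \<le> a" using r c v by (auto intro!: scaleR_nonneg_nonneg)
next
  fix y assume H: "\<forall>a\<in>range (\<lambda>n. (c * r ^ n) *\<^sub>R v). y \<le> a"
  have inf: "is_infimum {(1 / real m) *\<^sub>R v | m. m \<ge> 1} 0"
    using arch v unfolding archimedean_vl_def by blast
  have lim: "(\<lambda>n. c * r^n) \<longlonglongrightarrow> 0"
    using tendsto_mult[OF tendsto_const LIMSEQ_power_zero[of r]] r by simp
  have "\<forall>a\<in>{(1 / real m) *\<^sub>R v | m. m \<ge> 1}. y \<le> a"
  proof
    fix a assume "a \<in> {(1 / real m) *\<^sub>R v | m. m \<ge> 1}"
    then obtain m where m: "m \<ge> 1" "a = (1 / real m) *\<^sub>R v" by blast
    have "0 < 1 / real m" using m by simp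
    from order_tendstoD(2)[OF lim this] obtain n where "c * r^n < 1 / real m"
      by (metis eventually_sequentially order_refl)
    hence "(c * r^n) *\<^sub>R v \<le> (1 / real m) *\<^sub>R v" using v by (intro scaleR_right_mono) auto
    moreover have "y \<le> (c * r^n) *\<^sub>R v" using H by auto
    ultimately show "y \<le> a" using m by auto
  qed
  thus "y \<le> 0" using inf unfolding is_infimum_def by blast
qed


lemma pos_scale_le0: fixes E :: "'v::ordered_real_vector"
  assumes "c *\<^sub>R E \<le> 0" "0 < c" shows "E \<le> 0"
  using pos_le_divideR_eq[of c E 0] assms by simp

lemma addh: fixes a :: "'v::ordered_ab_group_add"
  assumes "0 \<le> a" "x \<le> b + c + e" shows "x \<le> a + b + c + e"
proof -
  have "b + c + e \<le> a + (b + c + e)" by (rule add_increasing[OF assms(1) order_refl])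
  also have "\<dots> = a + b + c + e" by (simp only: add.assoc)
  finally show ?thesis using assms(2) by (rule order_trans[rotated])
qed

lemma D_step: fixes D m :: "'v::ordered_real_vector"
  assumes "D \<le> q *\<^sub>R (D + m + m + m) + q *\<^sub>R (D + m + m + m) + m" "0 \<le> q" "q < 1/3" "0 \<le> m"
  shows "((1 - 2*q)/3) *\<^sub>R D \<le> m"
proof -
  have e: "q *\<^sub>R (D + m + m + m) + q *\<^sub>R (D + m + m + m) + m = (q+q) *\<^sub>R D + (q+q+q+q+q+q+1) *\<^sub>R m"
    by (simp only: scaleR_add_right scaleR_add_left scaleR_one add_ac)
  have A: "D \<le> (q+q) *\<^sub>R D + (q+q+q+q+q+q+1) *\<^sub>R m" using assms(1) e by simp
  have "(1 - (q+q)) *\<^sub>R D = D - (q+q) *\<^sub>R D" by (simp only: scaleR_diff_left scaleR_one)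
  also have "\<dots> \<le> (q+q+q+q+q+q+1) *\<^sub>R m" using A by (subst diff_le_eq) (simp only: add.commute)
  also have "\<dots> \<le> 3 *\<^sub>R m" using assms by (intro scaleR_right_mono) auto
  finally have B: "(1 - (q+q)) *\<^sub>R D \<le> 3 *\<^sub>R m" .
  have "(1/3) *\<^sub>R ((1 - (q+q)) *\<^sub>R D) \<le> (1/3) *\<^sub>R (3 *\<^sub>R m)"
    by (rule scaleR_left_mono[OF B]) simp
  moreover have "(1/3) *\<^sub>R ((1 - (q+q)) *\<^sub>R D) = ((1 - 2*q)/3) *\<^sub>R D" by simp
  moreover have "(1/3) *\<^sub>R (3 *\<^sub>R m) = m" by simp
  ultimately show ?thesis by simp
qed

theorem theorem2p2:
  fixes S :: "'a \<Rightarrow> 'a \<Rightarrow> 'a \<Rightarrow> 'v::{ordered_real_vector, lattice}"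
    and K f :: "'a \<Rightarrow> 'a"
    and q :: real
  assumes "vector_S_metric S"
    and "V_complete_on S UNIV"
    and "archimedean_vl TYPE('v)"
    and "V_continuous S K"
    and "\<And>x. f (K x) = K (f x)"
    and "range f \<subseteq> range K"
    and "0 \<le> q" and "q < 1/3"
    and "\<And>x y. \<exists>U \<in> {S (K x) (K x) (K y), S (K x) (K x) (f x), S (K y) (K y) (f y),
                         S (K x) (K x) (f y), S (K y) (K y) (f x)}.
               S (f x) (f x) (f y) \<le> q *\<^sub>R U"
    and "V_complete_on S (range K) \<or> V_complete_on S (range f)"
  shows "\<exists>!z. K z = z \<and> f z = z"
proof -
  note Sm = assms(1)
  note nn = Sm_nonneg[OF Sm] and sym = Sm_sym[OF Sm] and tri = Sm_tri[OF Sm] and zero = Sm_zero[OF Sm]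
  have zz: "S x x x = 0" for x using zero[of x x x] by simp
  have "\<forall>x. \<exists>y. K y = f x"
  proof
    fix x
    have "f x \<in> range K" by (rule subsetD[OF assms(6) rangeI])
    then show "\<exists>y. K y = f x" by (metis rangeE)
  qed
  then obtain g where g: "\<And>x. K (g x) = f x" by metis
  define xs where "xs n = (g ^^ n) undefined" for n
  define y where "y n = f (xs n)" for n
  have Kx: "K (xs (Suc n)) = y n" for n by (simp add: xs_def y_def g)
  define d where "d n = S (y n) (y n) (y (Suc n))" for n
  define lam where "lam = 2*q/(1-q)"
  have lam0: "0 \<le> lam" using assms(7,8) unfolding lam_def by simp
  have lam1: "lam < 1" using assms(7,8) unfolding lam_def by (simp add: divide_less_eq)
  have stp: "d (Suc n) \<le> lam *\<^sub>R d n" for n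
  proof -
    from assms(9)[of "xs (Suc n)" "xs (Suc (Suc n))"] obtain U where
      U: "U \<in> {S (y n) (y n) (y (Suc n)), S (y n) (y n) (y (Suc n)), S (y (Suc n)) (y (Suc n)) (y (Suc (Suc n))),
                S (y n) (y n) (y (Suc (Suc n))), S (y (Suc n)) (y (Suc n)) (y (Suc n))}"
      and le: "d (Suc n) \<le> q *\<^sub>R U"
      by (auto simp: Kx d_def y_def[symmetric])
    have Ub: "U \<le> d n + d n + d (Suc n)"
    proof -
      have d0: "0 \<le> d k" for k by (simp add: d_def nn)
      have z: "S (y (Suc n)) (y (Suc n)) (y (Suc n)) = 0" using zero by simp
      have c1: "d n \<le> d n + d n + d (Suc n)"
        using add_mono[OF add_mono[OF order_refl[of "d n"] d0[of n]] d0[of "Suc n"]] by simp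
      have c3: "d (Suc n) \<le> d n + d n + d (Suc n)"
        using add_mono[OF add_mono[OF d0[of n] d0[of n]] order_refl[of "d (Suc n)"]] by simp
      have c4: "S (y n) (y n) (y (Suc (Suc n))) \<le> d n + d n + d (Suc n)"
        using tri[of "y n" "y (Suc (Suc n))" "y (Suc n)"] by (simp add: d_def)
      have c5: "0 \<le> d n + d n + d (Suc n)" using d0 by (simp add: add_nonneg_nonneg)
      from U show ?thesis using c1 c3 c4 c5 z by (auto simp: d_def)
    qed
    have "d (Suc n) \<le> q *\<^sub>R (d n + d n + d (Suc n))"
      using le scaleR_left_mono[OF Ub assms(7)] by (rule order_trans)
    thus ?thesis unfolding lam_def using contr_step assms(7,8) by blast
  qed
  have d0: "0 \<le> d k" for k by (simp add: d_def nn)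
  have dn: "d n \<le> (lam^n) *\<^sub>R d 0" for n
  proof (induction n)
    case 0 then show ?case by simp
  next
    case (Suc n)
    have "d (Suc n) \<le> lam *\<^sub>R d n" by (rule stp)
    also have "\<dots> \<le> lam *\<^sub>R ((lam^n) *\<^sub>R d 0)" by (rule scaleR_left_mono[OF Suc lam0])
    finally show ?case by simp
  qed
  have cau: "S (y n) (y n) (y (n + m)) \<le> (2 * lam^n * (1 - lam^m) / (1 - lam)) *\<^sub>R d 0" for m n
  proof (induction m arbitrary: n)
    case 0 then show ?case using zero[of "y n" "y n" "y n"] by simp
  next
    case (Suc m)
    have "S (y n) (y n) (y (n + Suc m)) \<le> d n + d n + S (y (Suc n)) (y (Suc n)) (y (Suc n + m))"
      using tri[of "y n" "y (n + Suc m)" "y (Suc n)"] by (simp add: d_def)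
    also have "\<dots> \<le> (lam^n) *\<^sub>R d 0 + (lam^n) *\<^sub>R d 0 + (2 * lam^Suc n * (1 - lam^m) / (1 - lam)) *\<^sub>R d 0"
      by (intro add_mono dn Suc)
    also have "\<dots> = (lam^n + lam^n + 2 * lam^Suc n * (1 - lam^m) / (1 - lam)) *\<^sub>R d 0"
      by (simp only: scaleR_add_left)
    also have "lam^n + lam^n + 2 * lam^Suc n * (1 - lam^m) / (1 - lam) = 2 * lam^n * (1 - lam^Suc m) / (1 - lam)"
    proof -
      have ne: "1 - lam \<noteq> 0" using lam1 by simp
      have "(lam^n + lam^n) * (1 - lam) + 2 * lam^Suc n * (1 - lam^m) = 2 * lam^n * (1 - lam^Suc m)"
        by (simp add: algebra_simps)
      thus ?thesis using ne by (simp add: divide_simps)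
    qed
    finally show ?case .
  qed
  have cau2: "S (y n) (y n) (y (n + m)) \<le> ((2 / (1 - lam)) * lam^n) *\<^sub>R d 0" for m n
  proof -
    have "2 * lam^n * (1 - lam^m) \<le> 2 * lam^n"
      using mult_left_mono[of "1 - lam^m" 1 "2*lam^n"] lam0 by simp
    hence "2 * lam^n * (1 - lam^m) / (1 - lam) \<le> 2 * lam^n / (1 - lam)"
      using lam1 by (intro divide_right_mono) auto
    hence "2 * lam^n * (1 - lam^m) / (1 - lam) \<le> (2 / (1 - lam)) * lam^n" by simp
    hence "(2 * lam^n * (1 - lam^m) / (1 - lam)) *\<^sub>R d 0 \<le> ((2 / (1 - lam)) * lam^n) *\<^sub>R d 0"
      using d0 by (intro scaleR_right_mono) auto
    with cau[of n m] show ?thesis by (rule order_trans)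
  qed
  have "decr_to_zero (\<lambda>n. ((2 / (1 - lam)) * lam^n) *\<^sub>R d 0)"
    by (rule decr_geom[OF assms(3) d0[of 0]]) (use lam0 lam1 in auto)
  hence "V_Cauchy S y" unfolding V_Cauchy_def using cau2 by (intro exI conjI allI)
  then obtain z where "V_converges S y z" using assms(2) unfolding V_complete_on_def by auto
  hence "V_converges S (\<lambda>n. K (y n)) (K z)" using assms(4) unfolding V_continuous_def by simp
  then obtain \<mu> where mu: "decr_to_zero \<mu>" and muS: "\<And>n. S (K (y n)) (K (y n)) (K z) \<le> \<mu> n"
    unfolding V_converges_def by blast
  define u where "u n = K (y n)" for n
  define w where "w = K z"
  define t where "t = f z"
  define D where "D = S w w t"
  have mub: "S (u n) (u n) w \<le> \<mu> n" for n using muS by (simp add: u_def w_def)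
  have mudec: "\<mu> (Suc n) \<le> \<mu> n" for n using mu unfolding decr_to_zero_def by blast
  have mu0: "0 \<le> \<mu> n" for n by (rule order_trans[OF nn mub[of n]])
  have D0: "0 \<le> D" by (simp add: D_def nn)
  have Dle: "((1 - 2*q)/3) *\<^sub>R D \<le> \<mu> n" for n
  proof -
    have fK: "f (K (xs (Suc n))) = u (Suc n)" by (simp add: assms(5) y_def u_def)
    have KK: "K (K (xs (Suc n))) = u n" by (simp add: Kx u_def)
    from assms(9)[of "K (xs (Suc n))" z] obtain U where
      U: "U \<in> {S (u n) (u n) w, S (u n) (u n) (u (Suc n)), S w w t, S (u n) (u n) t, S w w (u (Suc n))}"
      and le: "S (u (Suc n)) (u (Suc n)) t \<le> q *\<^sub>R U"
      by (auto simp: fK KK w_def[symmetric] t_def[symmetric])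
    have mS: "S (u (Suc n)) (u (Suc n)) w \<le> \<mu> n" using mub[of "Suc n"] mudec[of n] by (rule order_trans)
    have Ub: "U \<le> D + \<mu> n + \<mu> n + \<mu> n"
    proof -
      have c1: "S (u n) (u n) w \<le> D + \<mu> n + \<mu> n + \<mu> n"
        using add_mono[OF add_mono[OF add_mono[OF D0 mu0[of n]] mu0[of n]] mub[of n]] by simp
      have c2: "S (u n) (u n) (u (Suc n)) \<le> D + \<mu> n + \<mu> n + \<mu> n"
      proof -
        have "S (u n) (u n) (u (Suc n)) \<le> S (u n) (u n) w + S (u n) (u n) w + S w w (u (Suc n))"
          by (rule tri)
        also have "\<dots> \<le> \<mu> n + \<mu> n + \<mu> n" using mub[of n] mS sym[of w "u (Suc n)"]
          by (intro add_mono) auto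
        finally show ?thesis by (rule addh[OF D0])
      qed
      have c3: "D \<le> D + \<mu> n + \<mu> n + \<mu> n"
        using add_mono[OF add_mono[OF add_mono[OF order_refl[of D] mu0[of n]] mu0[of n]] mu0[of n]] by simp
      have c4: "S (u n) (u n) t \<le> D + \<mu> n + \<mu> n + \<mu> n"
      proof -
        have "S (u n) (u n) t \<le> S (u n) (u n) w + S (u n) (u n) w + S w w t"
          by (rule tri)
        also have "\<dots> \<le> \<mu> n + \<mu> n + D" using mub[of n] by (intro add_mono) (auto simp: D_def)
        also have "\<dots> = D + \<mu> n + \<mu> n + 0" by (simp add: ac_simps)
        also have "\<dots> \<le> D + \<mu> n + \<mu> n + \<mu> n"
          by (rule add_mono[OF order_refl mu0])
        finally show ?thesis .
      qed
      have c5: "S w w (u (Suc n)) \<le> D + \<mu> n + \<mu> n + \<mu> n"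
        using add_mono[OF add_mono[OF add_mono[OF D0 mu0[of n]] mu0[of n]] mS] sym[of w "u (Suc n)"] by simp
      from U show ?thesis using c1 c2 c3 c4 c5 by (auto simp: D_def)
    qed
    have st: "S t t (u (Suc n)) \<le> q *\<^sub>R (D + \<mu> n + \<mu> n + \<mu> n)"
    proof -
      have "S (u (Suc n)) (u (Suc n)) t \<le> q *\<^sub>R (D + \<mu> n + \<mu> n + \<mu> n)"
        by (rule order_trans[OF le scaleR_left_mono[OF Ub assms(7)]])
      thus ?thesis using sym[of t "u (Suc n)"] by simp
    qed
    have "D \<le> S t t (u (Suc n)) + S t t (u (Suc n)) + S (u (Suc n)) (u (Suc n)) w"
      using tri[of t w "u (Suc n)"] sym[of w t] by (simp add: D_def)
    also have "\<dots> \<le> q *\<^sub>R (D + \<mu> n + \<mu> n + \<mu> n) + q *\<^sub>R (D + \<mu> n + \<mu> n + \<mu> n) + \<mu> n"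
      using st mS by (intro add_mono)
    finally show ?thesis by (rule D_step[OF _ assms(7,8) mu0])
  qed
  have inf: "is_infimum (range \<mu>) 0" using mu unfolding decr_to_zero_def by simp
  hence infc: "\<forall>y. (\<forall>a\<in>range \<mu>. y \<le> a) \<longrightarrow> y \<le> 0" unfolding is_infimum_def by (rule conjunct2)
  have "\<forall>a\<in>range \<mu>. ((1 - 2*q)/3) *\<^sub>R D \<le> a" using Dle by auto
  hence "((1 - 2*q)/3) *\<^sub>R D \<le> 0" by (rule mp[OF spec[OF infc]])
  hence "D \<le> 0" by (rule pos_scale_le0) (use assms(8) in simp)
  hence "D = 0" by (rule antisym[OF _ D0])
  hence Kzfz: "K z = f z" using zero by (simp add: D_def w_def t_def)
  define v where "v = f z"
  have fv: "f v = K v" using assms(5)[of z] Kzfz by (simp add: v_def)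
  have Kz: "K z = v" using Kzfz by (simp add: v_def)
  define E where "E = S (f v) (f v) v"
  have E0: "0 \<le> E" by (simp add: E_def nn)
  from assms(9)[of v z] obtain U where
    U: "U \<in> {S (f v) (f v) v, S (f v) (f v) (f v), S v v v, S (f v) (f v) v, S v v (f v)}"
    and le: "E \<le> q *\<^sub>R U"
    by (auto simp: fv[symmetric] Kz E_def v_def[symmetric])
  have UE: "U \<le> E" using U E0 sym[of v "f v"] by (auto simp: E_def zz)
  have "E \<le> q *\<^sub>R E" by (rule order_trans[OF le scaleR_left_mono[OF UE assms(7)]])
  hence "E \<le> 0" by (rule le_self_scale) (use assms(8) in simp)
  hence "E = 0" by (rule antisym[OF _ E0])
  hence fvv: "f v = v" using zero by (simp add: E_def)
  have ex: "K v = v \<and> f v = v" using fvv fv by simp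
  have uniq: "a = b" if a: "K a = a" "f a = a" and b: "K b = b" "f b = b" for a b
  proof -
    define F where "F = S a a b"
    have F0: "0 \<le> F" by (simp add: F_def nn)
    from assms(9)[of a b] obtain U where
      U: "U \<in> {S a a b, S a a a, S b b b, S a a b, S b b a}" and le: "F \<le> q *\<^sub>R U"
      using a b by (auto simp: F_def)
    have UF: "U \<le> F" using U F0 sym[of b a] by (auto simp: F_def zz)
    have "F \<le> q *\<^sub>R F" by (rule order_trans[OF le scaleR_left_mono[OF UF assms(7)]])
    hence "F \<le> 0" by (rule le_self_scale) (use assms(8) in simp)
    hence "F = 0" by (rule antisym[OF _ F0])
    thus ?thesis using zero by (simp add: F_def)
  qed
  show ?thesis by (rule ex1I[of _ v]) (use ex uniq in auto)
qed

end
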